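(* Let $X$ and $Y$ be non-negative random variables. Then $X\geq_{ss}Y$ if and only if $h(X)\geq_{ss}h(Y)$ for every star-shaped function $h$.
   Context: A function $h:[0,\infty)\to[0,\infty)$ with $h(0)=0$ is star-shaped (at the origin) if $x\mapsto h(x)/x$ is increasing (non-decreasing) on $(0,\infty)$. For non-negative random variables $X,Y$, $X\geq_{ss}Y$ (star-shaped order) means $\mathbb{E}\,u(X)\geq\mathbb{E}\,u(Y)$ for every star-shaped function $u$ for which the expectations exist. *)

theory Defs
  imports "HOL-Probability.Probability"
begin

definition star_shaped :: "(real \<Rightarrow> real) \<Rightarrow> bool" where
  "star_shaped h \<longleftrightarrow> h 0 = 0 \<and> (\<forall>x\<ge>0. h x \<ge> 0) \<and> mono_on {0<..} (\<lambda>x. h x / x)"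

text \<open>Since star-shaped u are non-negative, E u(X) always exists in [0,\<infinity>];
  expectations are taken as non-negative (extended) integrals.\<close>
definition ss_ge :: "'a measure \<Rightarrow> ('a \<Rightarrow> real) \<Rightarrow> 'b measure \<Rightarrow> ('b \<Rightarrow> real) \<Rightarrow> bool" where
  "ss_ge M X N Y \<longleftrightarrow> (\<forall>u. star_shaped u \<longrightarrow>
      (\<integral>\<^sup>+ \<omega>. ennreal (u (X \<omega>)) \<partial>M) \<ge> (\<integral>\<^sup>+ \<omega>. ennreal (u (Y \<omega>)) \<partial>N))"

end

theory Submission
  imports Defs
begin

lemma star_shaped_id: "star_shaped (\<lambda>x. x)"
  unfolding star_shaped_def by (auto intro!: mono_onI)

lemma ssD:
  assumes "star_shaped h"
  shows "h 0 = 0" "\<And>x. x \<ge> 0 \<Longrightarrow> h x \<ge> 0"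
    "\<And>x y. 0 < x \<Longrightarrow> x \<le> y \<Longrightarrow> h x / x \<le> h y / y"
proof -
  show "h 0 = 0" using assms unfolding star_shaped_def by blast
  show "\<And>x. x \<ge> 0 \<Longrightarrow> h x \<ge> 0" using assms unfolding star_shaped_def by blast
  fix x y :: real assume "0 < x" "x \<le> y"
  moreover have "mono_on {0<..} (\<lambda>x. h x / x)" using assms unfolding star_shaped_def by blast
  moreover have "x \<in> {0<..}" "y \<in> {0<..}" using \<open>0 < x\<close> \<open>x \<le> y\<close> by auto
  ultimately show "h x / x \<le> h y / y"
    using mono_onD by blast
qed

lemma star_shaped_mono:
  assumes "star_shaped h" "0 \<le> x" "x \<le> y"
  shows "h x \<le> h y"
proof (cases "x = 0")
  case True
  then show ?thesis using assms ssD[OF assms(1)] by simp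
next
  case False
  then have x: "x > 0" using assms by auto
  have y: "y > 0" using x assms by linarith
  have g: "h x / x \<le> h y / y"
    using ssD(3)[OF assms(1) x assms(3)] .
  have g0: "0 \<le> h x / x" using ssD(2)[OF assms(1)] x by simp
  have "h x = x * (h x / x)" using x by simp
  also have "\<dots> \<le> y * (h y / y)"
    using assms(3) g g0 y by (intro mult_mono) auto
  also have "\<dots> = h y" using y by simp
  finally show ?thesis .
qed

lemma star_shaped_comp:
  assumes u: "star_shaped u" and h: "star_shaped h"
  shows "star_shaped (u \<circ> h)"
  unfolding star_shaped_def
proof (intro conjI allI impI mono_onI)
  show "(u \<circ> h) 0 = 0" using ssD(1)[OF u] ssD(1)[OF h] by simp
  fix x :: real assume "0 \<le> x"
  then show "0 \<le> (u \<circ> h) x" using ssD(2)[OF u] ssD(2)[OF h] by simp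
next
  fix x y :: real assume x': "x \<in> {0<..}" and y': "y \<in> {0<..}" and xy: "x \<le> y"
  have x: "x > 0" and y: "y > 0" using x' y' by auto
  have hx: "h x \<ge> 0" and hy: "h y \<ge> 0" using ssD(2)[OF h] x y by auto
  have uy: "u (h y) \<ge> 0" using ssD(2)[OF u] hy by blast
  have hxy: "h x \<le> h y" using star_shaped_mono[OF h] x xy by simp
  show "(u \<circ> h) x / x \<le> (u \<circ> h) y / y"
  proof (cases "h x = 0")
    case True
    have "(u \<circ> h) x / x = 0" using True ssD(1)[OF u] by simp
    also have "0 \<le> (u \<circ> h) y / y" using uy y by simp
    finally show ?thesis .
  next
    case False
    then have hx': "h x > 0" using hx by auto
    have a: "u (h x) / h x \<le> u (h y) / h y"
      using ssD(3)[OF u hx' hxy] .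
    have b: "h x / x \<le> h y / y"
      using ssD(3)[OF h x xy] .
    have a0: "0 \<le> u (h y) / h y" using uy hy by simp
    have b0: "0 \<le> h x / x" using hx x by simp
    have "(u \<circ> h) x / x = (u (h x) / h x) * (h x / x)" using hx' by simp
    also have "\<dots> \<le> (u (h y) / h y) * (h y / y)"
      using a b a0 b0 by (rule mult_mono)
    also have "\<dots> = (u \<circ> h) y / y" using hx' hxy by simp
    finally show ?thesis .
  qed
qed

theorem lemma12:
  fixes M :: "'a measure" and N :: "'b measure"
    and X :: "'a \<Rightarrow> real" and Y :: "'b \<Rightarrow> real"
  assumes "prob_space M" and "prob_space N"
    and "X \<in> borel_measurable M" and "Y \<in> borel_measurable N"
    and "\<forall>\<omega>\<in>space M. X \<omega> \<ge> 0" and "\<forall>\<omega>\<in>space N. Y \<omega> \<ge> 0"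
  shows "ss_ge M X N Y \<longleftrightarrow> (\<forall>h. star_shaped h \<longrightarrow> ss_ge M (h \<circ> X) N (h \<circ> Y))"
proof
  assume H: "ss_ge M X N Y"
  show "\<forall>h. star_shaped h \<longrightarrow> ss_ge M (h \<circ> X) N (h \<circ> Y)"
  proof (intro allI impI)
    fix h assume h: "star_shaped h"
    show "ss_ge M (h \<circ> X) N (h \<circ> Y)"
      unfolding ss_ge_def
    proof (intro allI impI)
      fix u assume u: "star_shaped u"
      have "star_shaped (u \<circ> h)" by (rule star_shaped_comp[OF u h])
      then have "(\<integral>\<^sup>+ \<omega>. ennreal ((u \<circ> h) (X \<omega>)) \<partial>M) \<ge> (\<integral>\<^sup>+ \<omega>. ennreal ((u \<circ> h) (Y \<omega>)) \<partial>N)"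
        using H unfolding ss_ge_def by blast
      then show "(\<integral>\<^sup>+ \<omega>. ennreal (u ((h \<circ> X) \<omega>)) \<partial>M) \<ge> (\<integral>\<^sup>+ \<omega>. ennreal (u ((h \<circ> Y) \<omega>)) \<partial>N)"
        by (simp only: comp_def)
    qed
  qed
next
  assume "\<forall>h. star_shaped h \<longrightarrow> ss_ge M (h \<circ> X) N (h \<circ> Y)"
  then have "ss_ge M ((\<lambda>x. x) \<circ> X) N ((\<lambda>x. x) \<circ> Y)" using star_shaped_id by blast
  then show "ss_ge M X N Y" by (simp only: comp_def)
qed

end
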